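(* Let $n\ge2$, $\alpha\in[0,\pi/2)$, $A,B\in\Pi_{s,\alpha}^n$, $q\in\mathbb{C}$ with $0<|q|\le1$, and $0<t<1$. Then (a) $|q|^2\,w_q(A\#_tB)\le\sec^3(\alpha)\,w_q^{1-t}(A)\,w_q^t(B)$; (b) $|q|^2\,w_q\big(((1-t)A^{-1}+tB^{-1})^{-1}\big)\le\sec^3(\alpha)\big((1-t)w_q^{-1}(A)+t\,w_q^{-1}(B)\big)^{-1}$.
   Context: For $\alpha\in[0,\pi/2)$, $S_\alpha=\{z\in\mathbb{C}:\operatorname{Re}z>0,\ |\operatorname{Im}z|\le\tan(\alpha)\operatorname{Re}z\}$, and $\Pi_{s,\alpha}^n$ is the set of $n\times n$ complex matrices whose numerical range is contained in $S_\alpha$. For an operator monotone $f:(0,\infty)\to(0,\infty)$ with $f(1)=1$ and probability measure $\nu_f$ on $[0,1]$ with $f(x)=\int_0^1((1-s)+sx^{-1})^{-1}d\nu_f(s)$, and accretive $X,Y$: $X\sigma_fY=\int_0^1((1-s)X^{-1}+sY^{-1})^{-1}d\nu_f(s)$. The weighted geometric mean is $A\#_tB=A\sigma_{f}B$ with $f(x)=x^t$ (equivalently $A\#_tB=\frac{\sin(t\pi)}{\pi}\int_0^\infty s^{t-1}(A^{-1}+sB^{-1})^{-1}ds$). $w_q(X)=\sup\{|\langle Xx,y\rangle|:\|x\|=\|y\|=1,\ \langle x,y\rangle=q\}$, with $w_q^{r}(X)=(w_q(X))^r$. *)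

theory Defs
  imports "HOL-Analysis.Analysis"
begin

definition cinner :: "complex^'n \<Rightarrow> complex^'n \<Rightarrow> complex" where
  "cinner x y = (\<Sum>i\<in>UNIV. x $ i * cnj (y $ i))"

definition numerical_range :: "complex^'n^'n \<Rightarrow> complex set" where
  "numerical_range X = {cinner (X *v x) x | x. norm x = 1}"

definition sector :: "real \<Rightarrow> complex set" where
  "sector \<alpha> = {z. 0 < Re z \<and> \<bar>Im z\<bar> \<le> tan \<alpha> * Re z}"

definition Pi_sector :: "real \<Rightarrow> (complex^'n^'n) set" where
  "Pi_sector \<alpha> = {X. numerical_range X \<subseteq> sector \<alpha>}"

definition geo_mean :: "real \<Rightarrow> complex^'n^'n \<Rightarrow> complex^'n^'n \<Rightarrow> complex^'n^'n" where
  "geo_mean t A B = (sin (t * pi) / pi) *\<^sub>R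
     integral {0<..} (\<lambda>s::real. (s powr (t - 1)) *\<^sub>R
        matrix_inv (matrix_inv A + s *\<^sub>R matrix_inv B))"

definition wq :: "complex \<Rightarrow> complex^'n^'n \<Rightarrow> real" where
  "wq q X = Sup {cmod (cinner (X *v x) y) | x y. norm x = 1 \<and> norm y = 1 \<and> cinner x y = q}"

end

theory Submission
  imports Defs
begin


lemma Beta_reflect:
  fixes t :: real assumes "0 < t" "t < 1"
  shows "Beta t (1 - t) = pi / sin (t * pi)"
proof -
  have "Gamma (complex_of_real t) * Gamma (1 - complex_of_real t) = of_real pi / sin (of_real pi * of_real t)"
    by (rule Gamma_reflection_complex)
  moreover have "Gamma (complex_of_real t) * Gamma (1 - complex_of_real t) = complex_of_real (Gamma t * Gamma (1 - t))"
    by (metis Gamma_complex_of_real of_real_1 of_real_diff of_real_mult)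
  moreover have "sin (of_real pi * of_real t) = complex_of_real (sin (pi * t))"
    by (metis of_real_mult sin_of_real)
  ultimately have "complex_of_real (Gamma t * Gamma (1 - t)) = complex_of_real (pi / sin (pi * t))"
    by simp
  hence "Gamma t * Gamma (1 - t) = pi / sin (pi * t)" using of_real_eq_iff by blast
  thus ?thesis by (simp add: Beta_def mult.commute)
qed

lemma aux_cancel: "(y::real) \<noteq> 0 \<Longrightarrow> c * (q * y) * y / (y * y) = c * q"
  by (simp add: field_simps)

lemma beta_ioi:
  fixes t :: real assumes t0: "0 < t" and t1: "t < 1" and m0: "0 < m"
  shows "((\<lambda>u. u powr (t-1) / (1+u/m)) has_integral (m powr t * (pi / sin (t*pi)))) {0<..}"
proof -
  define h0 where "h0 x = x powr (t-1) * (1-x) powr ((1-t)-1)" for x::real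
  define h where "h x = m powr t * h0 x" for x::real
  define f where "f u = u powr (t-1) / (1+u/m)" for u::real
  define g where "g x = m * (x / (1 - x))" for x::real
  define g' where "g' x = m / (1 - x)^2" for x::real
  have i00: "set_integrable lborel (einterval 0 1) h0"
    unfolding h0_def
    by (rule set_integrable_subset[OF integrable_Beta[of t "1-t"]])
       (use t0 t1 in \<open>auto simp: einterval_def zero_ereal_def one_ereal_def\<close>)
  have i01: "set_integrable lborel (einterval 0 1) h"
    unfolding h_def using i00 by (rule set_integrable_mult_right)
  have fgh0: "(x powr (t-1) / (1-x) powr (t-1)) / (1 + x/(1-x)) / (1-x)^2 = h0 x" if "0 < x" "x < 1" for x
  proof -
    have a: "1 - x > 0" using that by simp
    have q: "1 + x/(1-x) = 1/(1-x)" using a by (simp add: field_simps)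
    have e: "(x powr (t-1) / (1-x) powr (t-1)) / (1 + x/(1-x)) / (1-x)^2 = (x powr (t-1) / (1-x) powr (t-1)) / (1/(1-x)) / (1-x)^2" by (simp only: q)
    have "(1-x) powr (t-1) * ((1-x) powr (-t) * (1-x) powr 1) = (1-x) powr (t-1 + -t + 1)"
      by (simp only: powr_add mult.assoc)
    hence k: "(1-x) powr (t-1) * ((1-x) powr (-t) * (1-x)) = 1" using a by simp
    have p: "(1-x) powr (t-1) > 0" using a by simp
    have iP: "1 / (1-x) powr (t-1) = (1-x) powr (-t) * (1-x)"
      using k p by (simp add: field_simps)
    have "(x powr (t-1) / (1-x) powr (t-1)) / (1/(1-x)) / (1-x)^2
       = x powr (t-1) * (1 / (1-x) powr (t-1)) * (1-x) / ((1-x) * (1-x))"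
      by (simp add: power2_eq_square)
    also have "\<dots> = x powr (t-1) * (1-x) powr (-t)"
      unfolding iP using a by (simp add: aux_cancel)
    finally show ?thesis unfolding e h0_def by simp
  qed
  have fgh: "f (g x) * g' x = h x" if "0 < x" "x < 1" for x
  proof -
    have a: "1 - x > 0" using that by simp
    have "f (g x) * g' x = m powr (t-1) * m * ((x powr (t-1) / (1-x) powr (t-1)) / (1 + x/(1-x)) / (1-x)^2)"
      unfolding f_def g_def g'_def using that a m0 by (simp add: powr_divide powr_mult)
    also have "m powr (t-1) * m = m powr t" using m0
      by (simp add: powr_diff)
    finally show ?thesis using fgh0[OF that] unfolding h_def by (metis times_divide_eq_right)
  qed
  have ifg: "set_integrable lborel (einterval 0 1) (\<lambda>x. f (g x) * g' x)"
    using i01 by (subst set_integrable_cong[OF refl refl, where f' = h])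
      (auto simp: einterval_def zero_ereal_def one_ereal_def fgh)
  have deriv: "DERIV g x :> g' x" if "0 < ereal x" "ereal x < 1" for x
  proof -
    have "x < 1" using that by (simp add: one_ereal_def)
    thus ?thesis unfolding g_def g'_def
      by (auto intro!: derivative_eq_intros simp: field_simps power2_eq_square)
  qed
  have contf: "isCont f (g x)" if "0 < ereal x" "ereal x < 1" for x
  proof -
    have "0 < x" "x < 1" using that by (simp_all add: zero_ereal_def one_ereal_def)
    hence "g x > 0" unfolding g_def using m0 by simp
    moreover have "1 + g x / m \<noteq> 0" using m0 \<open>g x > 0\<close> by (smt (verit) divide_pos_pos)
    ultimately show ?thesis unfolding f_def
        using m0 by (intro continuous_intros) auto
  qed
  have contg': "isCont g' x" if "0 < ereal x" "ereal x < 1" for x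
  proof -
    have "x < 1" using that by (simp add: one_ereal_def)
    thus ?thesis unfolding g'_def by (auto intro!: continuous_intros)
  qed
  have fnn: "0 \<le> f (g x)" if "0 < ereal x" "ereal x < 1" for x
  proof -
    have "0 < x" "x < 1" using that by (simp_all add: zero_ereal_def one_ereal_def)
    thus ?thesis unfolding f_def g_def using m0 by simp
  qed
  have g'nn: "0 \<le> g' x" for x unfolding g'_def using m0 by simp
  have limA: "((ereal \<circ> g \<circ> real_of_ereal) \<longlongrightarrow> 0) (at_right 0)"
  proof -
    have "(g \<longlongrightarrow> 0) (at_right 0)" unfolding g_def
      by (auto intro!: tendsto_eq_intros)
    thus ?thesis unfolding zero_ereal_def
      by (simp add: ereal_tendsto_simps comp_assoc[symmetric])
  qed
  have limB: "((ereal \<circ> g \<circ> real_of_ereal) \<longlongrightarrow> \<infinity>) (at_left 1)"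
  proof -
    have t1: "((\<lambda>x::real. 1 - x) \<longlongrightarrow> 0) (at_left 1)"
      by (auto intro!: tendsto_eq_intros)
    have ev: "eventually (\<lambda>x::real. 0 < 1 - x) (at_left 1)"
      by (simp add: eventually_at_left_field) (auto intro: exI[of _ 0])
    have "LIM x (at_left (1::real)). inverse (1 - x) :> at_top"
      using filterlim_inverse_at_top[OF t1 ev] by simp
    hence "LIM x (at_left (1::real)). x * inverse (1 - x) :> at_top"
      by (rule filterlim_tendsto_pos_mult_at_top[rotated 2]) (auto intro!: tendsto_eq_intros)
    hence "LIM x (at_left (1::real)). m * (x * inverse (1 - x)) :> at_top"
      by (rule filterlim_tendsto_pos_mult_at_top[rotated 2]) (use m0 in \<open>auto intro!: tendsto_eq_intros\<close>)
    hence "LIM x (at_left (1::real)). g x :> at_top" unfolding g_def by (simp add: field_simps)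
    thus ?thesis unfolding one_ereal_def
      by (simp add: ereal_tendsto_simps comp_assoc[symmetric])
  qed
  have sub: "set_integrable lborel (einterval 0 \<infinity>) f"
    "(LBINT x=0..\<infinity>. f x) = (LBINT x=0..1. (f (g x) * g' x))"
    using interval_integral_substitution_nonneg[of 0 1 g g' f 0 "\<infinity>", OF _ deriv contf contg' fnn g'nn limA limB ifg]
    by auto
  have "(LBINT x=0..1. (f (g x) * g' x)) = (LBINT x=0..1. h x)"
    by (rule interval_lebesgue_integral_cong)
      (auto simp: einterval_def zero_ereal_def one_ereal_def fgh)
  also have "\<dots> = (LINT x : {0<..<1} | lborel. h x)"
    by (simp add: interval_lebesgue_integral_def zero_ereal_def one_ereal_def)
  also have "\<dots> = integral {0<..<1} h"
    using i01 by (simp add: zero_ereal_def one_ereal_def set_borel_integral_eq_integral(2))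
  also have "\<dots> = m powr t * Beta t (1-t)"
    using has_integral_Beta_real[of t "1-t"] t0 t1 unfolding h_def h0_def
    by (simp add: has_integral_Icc_iff_Ioo integral_unique)
  also have "\<dots> = m powr t * (pi / sin (t*pi))" using Beta_reflect t0 t1 by simp
  finally have val: "(LBINT x=0..\<infinity>. f x) = m powr t * (pi / sin (t*pi))" using sub(2) by simp
  have e: "einterval 0 \<infinity> = {0<..}" by (simp add: zero_ereal_def)
  have "(LBINT x=0..\<infinity>. f x) = (LINT x : {0<..} | lborel. f x)"
    by (simp add: interval_lebesgue_integral_def e)
  also have "\<dots> = integral {0<..} f"
    using sub(1) e by (simp add: set_borel_integral_eq_integral(2))
  finally have "integral {0<..} f = m powr t * (pi / sin (t*pi))" using val by simp
  moreover have "f integrable_on {0<..}"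
    using sub(1) e by (simp add: set_borel_integral_eq_integral(1))
  ultimately show ?thesis unfolding f_def by (metis has_integral_integrable_integral)
qed


lemma cinner_add_left: "cinner (x + y) z = cinner x z + cinner y z"
  unfolding cinner_def by (simp add: distrib_right sum.distrib)
lemma cinner_add_right: "cinner x (y + z) = cinner x y + cinner x z"
  unfolding cinner_def by (simp add: distrib_left sum.distrib)
lemma cinner_diff_left: "cinner (x - y) z = cinner x z - cinner y z"
  unfolding cinner_def by (simp add: left_diff_distrib sum_subtractf)
lemma cinner_diff_right: "cinner x (y - z) = cinner x y - cinner x z"
  unfolding cinner_def by (simp add: right_diff_distrib sum_subtractf)
lemma cinner_scal_left: "cinner (c *s x) z = c * cinner x z"
  unfolding cinner_def by (simp add: sum_distrib_left mult.assoc)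
lemma cinner_scal_right: "cinner x (c *s z) = cnj c * cinner x z"
  unfolding cinner_def by (simp add: sum_distrib_left mult.left_commute)
lemma cinner_zero_left[simp]: "cinner 0 z = 0"
  unfolding cinner_def by simp
lemma cinner_zero_right[simp]: "cinner x 0 = 0"
  unfolding cinner_def by simp
lemma cinner_cnj: "cnj (cinner x y) = cinner y x"
  unfolding cinner_def by (simp add: mult.commute)

lemma norm_vec_sq: "(norm (x::complex^'n))^2 = (\<Sum>i\<in>UNIV. (cmod (x$i))^2)"
  unfolding norm_vec_def L2_set_def by (simp add: sum_nonneg)

lemma cinner_self: "cinner x x = complex_of_real ((norm x)^2)"
proof -
  have "cinner x x = (\<Sum>i\<in>UNIV. complex_of_real ((cmod (x$i))^2))"
    unfolding cinner_def by (simp only: complex_norm_square)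
  also have "\<dots> = complex_of_real ((norm x)^2)" unfolding norm_vec_sq of_real_sum ..
  finally show ?thesis .
qed

lemma cinner_CS: "cmod (cinner x y) \<le> norm x * norm y"
proof -
  have "cmod (cinner x y) \<le> (\<Sum>i\<in>UNIV. cmod (x$i * cnj (y$i)))"
    unfolding cinner_def by (rule norm_sum)
  also have "\<dots> = (\<Sum>i\<in>UNIV. \<bar>cmod (x$i)\<bar> * \<bar>cmod (y$i)\<bar>)"
    by (simp add: norm_mult)
  also have "\<dots> \<le> L2_set (\<lambda>i. cmod (x$i)) UNIV * L2_set (\<lambda>i. cmod (y$i)) UNIV"
    by (rule L2_set_mult_ineq)
  finally show ?thesis unfolding norm_vec_def .
qed

lemma norm_scal: "norm (c *s (x::complex^'n)) = cmod c * norm x"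
  unfolding norm_vec_def by (simp add: norm_mult L2_set_right_distrib)

lemma mv_add: "(X::complex^'n^'m) *v (x + y) = X *v x + X *v y"
  by (simp add: matrix_vector_right_distrib)
lemma mv_diff: "(X::complex^'n^'m) *v (x - y) = X *v x - X *v y"
  by (simp add: matrix_vector_mult_diff_distrib)
lemma mv_scal: "(X::complex^'n^'m) *v (c *s x) = c *s (X *v x)"
  by (simp add: vec_eq_iff matrix_vector_mult_def sum_distrib_left mult.left_commute)
lemma mv_zero[simp]: "(X::complex^'n^'m) *v 0 = 0"
  by (simp add: vec_eq_iff matrix_vector_mult_def)
lemma cscaleR: "(r::real) *\<^sub>R (z::complex) = complex_of_real r * z"
  by (simp add: scaleR_conv_of_real)

lemma mv_lin: "((a::real) *\<^sub>R (M::complex^'n^'m) + b *\<^sub>R N) *v x = complex_of_real a *s (M *v x) + complex_of_real b *s (N *v x)"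
  by (simp add: vec_eq_iff matrix_vector_mult_def sum_distrib_left distrib_right sum.distrib cscaleR mult.assoc)

lemma scaleR_as_scal: "(r::real) *\<^sub>R (x::complex^'n) = complex_of_real r *s x"
  by (simp add: vec_eq_iff cscaleR)



lemma quad_disc:
  fixes p b q :: real
  assumes q: "q \<ge> 0" and h: "\<And>l. 0 \<le> p - 2*l*b + l^2*q"
  shows "b^2 \<le> p*q"
proof (cases "q = 0")
  case True
  have "b = 0"
  proof (rule ccontr)
    assume "b \<noteq> 0"
    have "0 \<le> p - 2*((p+1)/(2*b))*b + ((p+1)/(2*b))^2*q" by (rule h)
    with True \<open>b \<noteq> 0\<close> show False by (simp add: field_simps)
  qed
  thus ?thesis using True by simp
next
  case False
  hence qp: "q > 0" using q by simp
  have "0 \<le> p - 2*(b/q)*b + (b/q)^2*q" by (rule h)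
  hence "0 \<le> p - b^2/q" using qp by (simp add: field_simps power2_eq_square)
  hence "b^2/q \<le> p" by simp
  thus ?thesis using qp by (simp add: field_simps)
qed

lemma alg_final:
  fixes S X P D \<sigma> \<rho> tt \<kappa> :: real
  assumes "\<rho> > 0" "\<sigma> \<ge> 0" "S \<ge> 0" "X \<ge> 0" "P \<ge> 0" "D \<ge> 0"
    and L: "S^2 * \<rho> \<le> D * \<sigma>" and P2: "P^2 = \<rho>^2 + \<kappa>^2" and D: "D = tt^2 * \<rho>^2 - \<kappa>^2"
  shows "(S + X * P)^2 \<le> (1 + tt^2) * \<rho> * (\<sigma> + X^2 * \<rho>)"
proof -
  have key: "2 * \<rho> * S * X * P \<le> P^2 * \<sigma> + D * X^2 * \<rho>"
  proof (cases "\<sigma> = 0")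
    case True
    hence "S^2 * \<rho> \<le> 0" using L by simp
    hence "S = 0" using assms(1,3) by (smt (verit) mult_pos_pos zero_less_power)
    thus ?thesis using assms by simp
  next
    case False
    hence sp: "\<sigma> > 0" using assms(2) by simp
    have "\<sigma> * (2 * \<rho> * S * X * P) \<le> (P*\<sigma>)^2 + (X*\<rho>*S)^2"
      using sum_squares_bound[of "P*\<sigma>" "X*\<rho>*S"] by (simp add: algebra_simps power2_eq_square)
    also have "(X*\<rho>*S)^2 = X^2 * \<rho> * (S^2 * \<rho>)" by (simp add: power2_eq_square)
    also have "\<dots> \<le> X^2 * \<rho> * (D * \<sigma>)"
      by (rule mult_left_mono[OF L]) (use assms in simp)
    finally have "\<sigma> * (2 * \<rho> * S * X * P) \<le> \<sigma> * (P^2 * \<sigma> + D * X^2 * \<rho>)"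
      by (simp add: algebra_simps power2_eq_square)
    thus ?thesis using sp by simp
  qed
  have "\<rho> * (S + X * P)^2 = S^2 * \<rho> + 2 * \<rho> * S * X * P + \<rho> * X^2 * P^2"
    by (simp add: algebra_simps power2_eq_square)
  also have "\<dots> \<le> D * \<sigma> + (P^2 * \<sigma> + D * X^2 * \<rho>) + \<rho> * X^2 * P^2"
    using L key by simp
  also have "\<dots> = \<rho> * ((1 + tt^2) * \<rho> * (\<sigma> + X^2 * \<rho>))"
    unfolding D using P2 by (simp add: algebra_simps power2_eq_square)
  finally show ?thesis using assms(1) by simp
qed

locale sesq =
  fixes \<phi> :: "complex^'n \<Rightarrow> complex^'n \<Rightarrow> complex" and \<tau> :: real
  assumes addL: "\<And>x y z. \<phi> (x + y) z = \<phi> x z + \<phi> y z"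
    and addR: "\<And>x y z. \<phi> x (y + z) = \<phi> x y + \<phi> x z"
    and scL: "\<And>c x z. \<phi> (c *s x) z = c * \<phi> x z"
    and scR: "\<And>c x z. \<phi> x (c *s z) = cnj c * \<phi> x z"
    and sec: "\<And>u. \<bar>Im (\<phi> u u)\<bar> \<le> \<tau> * Re (\<phi> u u)"
    and nn: "\<And>u. 0 \<le> Re (\<phi> u u)"
    and tau: "0 \<le> \<tau>"
begin

lemma expand: "\<phi> (y + d *s w) (y + d *s w) = \<phi> y y + cnj d * \<phi> y w + d * \<phi> w y + d * cnj d * \<phi> w w"
  by (simp add: addL addR scL scR algebra_simps)

lemma zeroL: "\<phi> 0 z = 0"
  using scL[of 0 0 z] by simp

lemma form_L:
  assumes orth: "\<phi> y w + cnj (\<phi> w y) = 0"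
  shows "(cmod (\<phi> y w))^2 * Re (\<phi> y y) \<le> (\<tau>^2 * (Re (\<phi> y y))^2 - (Im (\<phi> y y))^2) * Re (\<phi> w w)"
proof -
  define \<rho> where "\<rho> = Re (\<phi> y y)"
  define \<kappa> where "\<kappa> = Im (\<phi> y y)"
  define \<sigma> where "\<sigma> = Re (\<phi> w w)"
  define \<delta> where "\<delta> = Im (\<phi> w w)"
  define s1 where "s1 = \<phi> y w"
  define S where "S = cmod s1"
  have s2: "\<phi> w y = - cnj s1" using orth unfolding s1_def
    by (metis add_eq_0_iff complex_cnj_cnj complex_cnj_minus)
  have r0: "0 \<le> \<rho>" "0 \<le> \<sigma>" unfolding \<rho>_def \<sigma>_def by (rule nn)+
  have k1: "\<bar>\<kappa>\<bar> \<le> \<tau> * \<rho>" unfolding \<kappa>_def \<rho>_def by (rule sec)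
  have d1: "\<bar>\<delta>\<bar> \<le> \<tau> * \<sigma>" unfolding \<delta>_def \<sigma>_def by (rule sec)
  have D0: "0 \<le> \<tau>^2 * \<rho>^2 - \<kappa>^2"
  proof -
    have "\<kappa>^2 \<le> (\<tau> * \<rho>)^2" using k1 by (metis abs_le_square_iff abs_of_nonneg tau r0(1) mult_nonneg_nonneg)
    thus ?thesis by (simp add: power_mult_distrib)
  qed
  show ?thesis
  proof (cases "s1 = 0")
    case True
    thus ?thesis using D0 r0 unfolding s1_def by (simp add: \<rho>_def \<kappa>_def \<sigma>_def)
  next
    case False
    hence Sp: "S > 0" unfolding S_def by simp
    have main: "\<bar>\<kappa> + 2*l*S + l^2*\<delta>\<bar> \<le> \<tau> * (\<rho> + l^2*\<sigma>)" for l :: real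
    proof -
      define d where "d = complex_of_real l * (- \<i> * s1 / complex_of_real S)"
      have ss: "s1 * cnj s1 = complex_of_real (S^2)" unfolding S_def
        by (simp only: complex_norm_square)
      have e1: "cnj d * s1 = \<i> * complex_of_real (l * S)"
        unfolding d_def using Sp ss by (simp add: field_simps power2_eq_square)
      have e2: "d * (- cnj s1) = \<i> * complex_of_real (l * S)"
        unfolding d_def using Sp ss by (simp add: field_simps power2_eq_square)
      have e3: "d * cnj d = complex_of_real (l^2)"
        unfolding d_def using Sp ss by (simp add: field_simps power2_eq_square)
      have "\<phi> (y + d *s w) (y + d *s w) = \<phi> y y + \<i> * complex_of_real (2 * l * S) + complex_of_real (l^2) * \<phi> w w"
        unfolding expand s2 using e1 e2 e3 unfolding s1_def by (simp add: algebra_simps)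
      hence "Re (\<phi> (y + d *s w) (y + d *s w)) = \<rho> + l^2 * \<sigma>" "Im (\<phi> (y + d *s w) (y + d *s w)) = \<kappa> + 2*l*S + l^2*\<delta>"
        unfolding \<rho>_def \<sigma>_def \<kappa>_def \<delta>_def by simp_all
      thus ?thesis using sec[of "y + d *s w"] by simp
    qed
    have q1: "S^2 \<le> (\<tau>*\<rho> - \<kappa>) * (\<tau>*\<sigma> - \<delta>)"
    proof (rule quad_disc)
      show "0 \<le> \<tau>*\<sigma> - \<delta>" using d1 by simp
      fix l :: real
      show "0 \<le> \<tau>*\<rho> - \<kappa> - 2*l*S + l^2*(\<tau>*\<sigma> - \<delta>)"
        using main[of l] by (simp add: algebra_simps abs_le_iff)
    qed
    have q2: "S^2 \<le> (\<tau>*\<rho> + \<kappa>) * (\<tau>*\<sigma> + \<delta>)"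
    proof (rule quad_disc)
      show "0 \<le> \<tau>*\<sigma> + \<delta>" using d1 by simp
      fix l :: real
      show "0 \<le> \<tau>*\<rho> + \<kappa> - 2*l*S + l^2*(\<tau>*\<sigma> + \<delta>)"
        using main[of "-l"] by (simp add: algebra_simps abs_le_iff)
    qed
    have a1: "0 \<le> \<tau>*\<rho> - \<kappa>" "0 \<le> \<tau>*\<rho> + \<kappa>" using k1 by auto
    have "S^2 * \<rho> \<le> (\<tau>*\<rho> - \<kappa>) * (\<tau>*\<rho> + \<kappa>) * \<sigma>"
    proof (cases "\<delta>*\<rho> + \<kappa>*\<sigma> \<ge> 0")
      case True
      have "S^2 * \<rho> \<le> (\<tau>*\<rho> - \<kappa>) * ((\<tau>*\<sigma> - \<delta>) * \<rho>)"
        using mult_right_mono[OF q1 r0(1)] by (simp add: mult.assoc)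
      also have "\<dots> \<le> (\<tau>*\<rho> - \<kappa>) * ((\<tau>*\<rho> + \<kappa>) * \<sigma>)"
        by (rule mult_left_mono[OF _ a1(1)]) (use True in \<open>simp add: algebra_simps\<close>)
      finally show ?thesis by (simp add: mult.assoc)
    next
      case False
      have "S^2 * \<rho> \<le> (\<tau>*\<rho> + \<kappa>) * ((\<tau>*\<sigma> + \<delta>) * \<rho>)"
        using mult_right_mono[OF q2 r0(1)] by (simp add: mult.assoc)
      also have "\<dots> \<le> (\<tau>*\<rho> + \<kappa>) * ((\<tau>*\<rho> - \<kappa>) * \<sigma>)"
        by (rule mult_left_mono[OF _ a1(2)]) (use False in \<open>simp add: algebra_simps\<close>)
      finally show ?thesis by (simp add: algebra_simps)
    qed
    thus ?thesis unfolding S_def s1_def \<rho>_def \<kappa>_def \<sigma>_def by (simp add: algebra_simps power2_eq_square)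
  qed
qed

lemma form_G:
  assumes pos: "\<And>u. Re (\<phi> u u) = 0 \<Longrightarrow> u = 0"
  shows "(cmod (\<phi> y z))^2 \<le> (1 + \<tau>^2) * Re (\<phi> y y) * Re (\<phi> z z)"
proof (cases "Re (\<phi> y y) = 0")
  case True
  hence "y = 0" by (rule pos)
  thus ?thesis using zeroL nn[of z] by simp
next
  case False
  define \<rho> where "\<rho> = Re (\<phi> y y)"
  define \<kappa> where "\<kappa> = Im (\<phi> y y)"
  have rp: "\<rho> > 0" using False nn[of y] unfolding \<rho>_def by simp
  define c where "c = ((\<phi> z y + cnj (\<phi> y z)) / 2) / complex_of_real \<rho>"
  define w where "w = z + (- c) *s y"
  have zw: "z = w + c *s y" unfolding w_def by (simp add: vec_eq_iff)
  have yy: "\<phi> y y = complex_of_real \<rho> + \<i> * complex_of_real \<kappa>"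
    unfolding \<rho>_def \<kappa>_def by (simp add: complex_eq_iff)
  have c2: "c * (2 * complex_of_real \<rho>) = \<phi> z y + cnj (\<phi> y z)"
    unfolding c_def using rp by (simp add: field_simps)
  have orth: "\<phi> y w + cnj (\<phi> w y) = 0"
  proof -
    have "\<phi> y w + cnj (\<phi> w y) = \<phi> y z + cnj (\<phi> z y) - cnj c * (\<phi> y y + cnj (\<phi> y y))"
      unfolding w_def addL addR scL scR by (simp add: algebra_simps)
    also have "\<phi> y y + cnj (\<phi> y y) = 2 * complex_of_real \<rho>" unfolding yy by (simp add: complex_eq_iff)
    also have "cnj c * (2 * complex_of_real \<rho>) = cnj (c * (2 * complex_of_real \<rho>))" by simp
    also have "\<dots> = \<phi> y z + cnj (\<phi> z y)" unfolding c2 by simp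
    finally show ?thesis by simp
  qed
  have L: "(cmod (\<phi> y w))^2 * \<rho> \<le> (\<tau>^2 * \<rho>^2 - \<kappa>^2) * Re (\<phi> w w)"
    using form_L[OF orth] unfolding \<rho>_def \<kappa>_def .
  have yz: "\<phi> y z = \<phi> y w + cnj c * \<phi> y y" unfolding zw by (simp add: addR scR)
  have wy: "\<phi> w y = - cnj (\<phi> y w)" using orth
    by (metis add_eq_0_iff complex_cnj_cnj complex_cnj_minus)
  have zz: "Re (\<phi> z z) = Re (\<phi> w w) + (cmod c)^2 * \<rho>"
  proof -
    have "\<phi> z z = \<phi> w w + (cnj c * \<phi> w y + c * \<phi> y w) + c * cnj c * \<phi> y y"
      unfolding zw expand by (simp add: algebra_simps)
    moreover have "Re (cnj c * \<phi> w y + c * \<phi> y w) = 0" unfolding wy by simp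
    moreover have "c * cnj c = complex_of_real ((cmod c)^2)" by (simp only: complex_norm_square)
    ultimately show ?thesis unfolding \<rho>_def by simp
  qed
  have k1: "\<bar>\<kappa>\<bar> \<le> \<tau> * \<rho>" unfolding \<kappa>_def \<rho>_def by (rule sec)
  have D0: "0 \<le> \<tau>^2 * \<rho>^2 - \<kappa>^2"
  proof -
    have "\<kappa>^2 \<le> (\<tau> * \<rho>)^2" using k1 by (metis abs_le_square_iff abs_of_nonneg tau rp less_imp_le mult_nonneg_nonneg)
    thus ?thesis by (simp add: power_mult_distrib)
  qed
  have P2: "(cmod (\<phi> y y))^2 = \<rho>^2 + \<kappa>^2" unfolding \<rho>_def \<kappa>_def by (simp add: cmod_power2)
  have "cmod (\<phi> y z) \<le> cmod (\<phi> y w) + cmod c * cmod (\<phi> y y)"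
    unfolding yz by (metis complex_mod_cnj norm_mult norm_triangle_ineq)
  hence "(cmod (\<phi> y z))^2 \<le> (cmod (\<phi> y w) + cmod c * cmod (\<phi> y y))^2"
    by (simp add: power_mono)
  also have "\<dots> \<le> (1 + \<tau>^2) * \<rho> * (Re (\<phi> w w) + (cmod c)^2 * \<rho>)"
    by (rule alg_final[OF rp nn _ _ _ D0 L P2 refl]) auto
  finally show ?thesis unfolding zz \<rho>_def .
qed

end


lemma cinner_axis: "cinner x (axis i c) = x$i * cnj c"
  unfolding cinner_def axis_def by (simp add: if_distrib cong: if_cong)

lemma norm_sq_cinner: "(norm x)^2 = Re (cinner x x)"
  by (simp add: cinner_self)

lemma exists_orth_unit:
  fixes x :: "complex^'n"
  assumes card: "CARD('n) \<ge> 2" and nx: "norm x = 1"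
  shows "\<exists>z. norm z = 1 \<and> cinner x z = 0"
proof -
  have "x \<noteq> 0" using nx by auto
  then obtain i where xi: "x$i \<noteq> 0" by (auto simp: vec_eq_iff)
  have "\<exists>j::'n. j \<noteq> i"
  proof (rule ccontr)
    assume "\<not> (\<exists>j::'n. j \<noteq> i)"
    hence "UNIV = {i}" by auto
    hence "CARD('n) = card {i}" by (metis)
    hence "CARD('n) = 1" by simp
    thus False using card by simp
  qed
  then obtain j where ji: "j \<noteq> i" by blast
  define v where "v = axis i (cnj (x$j)) - axis j (cnj (x$i))"
  have cv: "cinner x v = 0" unfolding v_def cinner_diff_right cinner_axis by simp
  have "v$j = - cnj (x$i)" unfolding v_def using ji by (simp add: axis_def)
  hence v0: "v \<noteq> 0" using xi by (metis complex_cnj_zero_iff neg_equal_0_iff_equal zero_index)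
  hence nv: "norm v > 0" by simp
  define z where "z = complex_of_real (1 / norm v) *s v"
  have "norm z = 1" unfolding z_def norm_scal using nv by (simp add: norm_divide)
  moreover have "cinner x z = 0" unfolding z_def cinner_scal_right cv by simp
  ultimately show ?thesis by blast
qed

lemma wq_witness:
  fixes x :: "complex^'n" and X :: "complex^'n^'n"
  assumes card: "CARD('n) \<ge> 2" and nx: "norm x = 1" and q1: "cmod q \<le> 1"
  shows "\<exists>y. norm y = 1 \<and> cinner x y = q \<and> cmod q * cmod (cinner (X *v x) x) \<le> cmod (cinner (X *v x) y)"
proof -
  obtain z where nz: "norm z = 1" and xz: "cinner x z = 0" using exists_orth_unit[OF card nx] by blast
  have zx: "cinner z x = 0" using xz cinner_cnj[of x z] by simp
  have xx: "cinner x x = 1" using nx by (simp add: cinner_self)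
  have zz: "cinner z z = 1" using nz by (simp add: cinner_self)
  define s where "s = sqrt (1 - (cmod q)^2)"
  have s2: "s^2 = 1 - (cmod q)^2" unfolding s_def using q1
    using power_le_one[of "cmod q" 2] by simp
  define y where "y e = cnj q *s x + complex_of_real (e * s) *s z" for e :: real
  have ny: "norm (y e) = 1" if "e = 1 \<or> e = -1" for e
  proof -
    have "cinner (y e) (y e) = q * cnj q + complex_of_real ((e * s)^2)"
      unfolding y_def cinner_add_left cinner_add_right cinner_scal_left cinner_scal_right xx zz xz zx
      by (simp add: power2_eq_square)
    also have "q * cnj q = complex_of_real ((cmod q)^2)" by (simp only: complex_norm_square)
    also have "complex_of_real ((cmod q)^2) + complex_of_real ((e * s)^2) = complex_of_real ((cmod q)^2 + (e * s)^2)"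
      by simp
    also have "(cmod q)^2 + (e * s)^2 = 1" using that s2 by (auto simp: power2_eq_square)
    finally have "(norm (y e))^2 = 1" by (simp add: norm_sq_cinner)
    thus ?thesis by (smt (verit) norm_ge_zero power2_eq_1_iff)
  qed
  have xy: "cinner x (y e) = q" for e
    unfolding y_def cinner_add_right cinner_scal_right xx xz by simp
  define a where "a = q * cinner (X *v x) x"
  define b where "b = complex_of_real s * cinner (X *v x) z"
  have Xy: "cinner (X *v x) (y e) = a + complex_of_real e * b" for e
    unfolding y_def cinner_add_right cinner_scal_right a_def b_def by simp
  have "2 * cmod a \<le> cmod (a + b) + cmod (a - b)"
    using norm_triangle_ineq[of "a+b" "a-b"] by simp
  hence "cmod a \<le> cmod (cinner (X *v x) (y 1)) \<or> cmod a \<le> cmod (cinner (X *v x) (y (-1)))"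
    unfolding Xy by auto
  moreover have "cmod a = cmod q * cmod (cinner (X *v x) x)" unfolding a_def by (simp add: norm_mult)
  ultimately show ?thesis using ny xy by (metis)
qed

lemma wq_bdd:
  fixes X :: "complex^'n^'n"
  shows "bdd_above {cmod (cinner (X *v x) y) | x y. norm x = 1 \<and> norm y = 1 \<and> cinner x y = q}"
proof -
  obtain K where K: "\<And>x. norm (X *v x) \<le> norm x * K"
    using bounded_linear.bounded[OF matrix_vector_mul_bounded_linear[of X]] by blast
  show ?thesis
  proof (rule bdd_aboveI[where M = K], clarify)
    fix x y :: "complex^'n" assume "norm x = 1" "norm y = 1"
    hence "cmod (cinner (X *v x) y) \<le> norm (X *v x)" using cinner_CS[of "X *v x" y] by simp
    also have "\<dots> \<le> K" using K[of x] \<open>norm x = 1\<close> by simp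
    finally show "cmod (cinner (X *v x) y) \<le> K" .
  qed
qed

lemma wq_lower:
  fixes x :: "complex^'n" and X :: "complex^'n^'n"
  assumes card: "CARD('n) \<ge> 2" and nx: "norm x = 1" and q1: "cmod q \<le> 1"
  shows "cmod q * cmod (cinner (X *v x) x) \<le> wq q X"
proof -
  obtain y where y: "norm y = 1" "cinner x y = q" "cmod q * cmod (cinner (X *v x) x) \<le> cmod (cinner (X *v x) y)"
    using wq_witness[OF card nx q1] by blast
  have "cmod (cinner (X *v x) y) \<le> wq q X"
    unfolding wq_def by (rule cSup_upper[OF _ wq_bdd]) (use nx y in blast)
  thus ?thesis using y(3) by linarith
qed

lemma wq_upper:
  fixes X :: "complex^'n^'n"
  assumes card: "CARD('n) \<ge> 2" and q1: "cmod q \<le> 1" and C: "\<And>x. norm (X *v x) \<le> C * norm x"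
  shows "wq q X \<le> C"
proof -
  define e :: "complex^'n" where "e = axis undefined 1"
  have ne1: "norm e = 1"
    unfolding e_def by (simp add: norm_sq_cinner cinner_axis power2_eq_1_iff[symmetric] axis_nth)
  then obtain y where "norm y = 1" "cinner e y = q"
    using wq_witness[OF card ne1 q1, of X] by blast
  hence ne: "{cmod (cinner (X *v x) y) | x y. norm x = 1 \<and> norm y = 1 \<and> cinner x y = q} \<noteq> {}"
    using ne1 by blast
  show ?thesis unfolding wq_def
  proof (rule cSup_least[OF ne], clarify)
    fix x y :: "complex^'n" assume "norm x = 1" "norm y = 1"
    hence "cmod (cinner (X *v x) y) \<le> norm (X *v x)" using cinner_CS[of "X *v x" y] by simp
    also have "\<dots> \<le> C" using C[of x] \<open>norm x = 1\<close> by simp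
    finally show "cmod (cinner (X *v x) y) \<le> C" .
  qed
qed



lemma Q_scale: "cinner (X *v (c *s v)) (c *s v) = (c * cnj c) * cinner (X *v v) v"
  by (simp add: mv_scal cinner_scal_left cinner_scal_right)

lemma unit_decomp:
  fixes u :: "complex^'n"
  assumes "u \<noteq> 0"
  shows "norm (complex_of_real (1 / norm u) *s u) = 1"
    "u = complex_of_real (norm u) *s (complex_of_real (1 / norm u) *s u)"
  using assms by (auto simp: norm_scal norm_divide vec_eq_iff)

lemma sect_unit:
  assumes "X \<in> Pi_sector \<alpha>" "norm u = 1"
  shows "0 < Re (cinner (X *v u) u) \<and> \<bar>Im (cinner (X *v u) u)\<bar> \<le> tan \<alpha> * Re (cinner (X *v u) u)"
proof -
  have "cinner (X *v u) u \<in> numerical_range X" unfolding numerical_range_def using assms(2) by blast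
  hence "cinner (X *v u) u \<in> sector \<alpha>" using assms(1) unfolding Pi_sector_def by blast
  thus ?thesis unfolding sector_def by simp
qed

lemma sect_all:
  assumes X: "X \<in> Pi_sector \<alpha>" and ta: "0 \<le> tan \<alpha>"
  shows "\<bar>Im (cinner (X *v u) u)\<bar> \<le> tan \<alpha> * Re (cinner (X *v u) u)"
    "0 \<le> Re (cinner (X *v u) u)"
    "u \<noteq> 0 \<Longrightarrow> 0 < Re (cinner (X *v u) u)"
proof -
  have all: "(\<bar>Im (cinner (X *v u) u)\<bar> \<le> tan \<alpha> * Re (cinner (X *v u) u)) \<and>
    (0 \<le> Re (cinner (X *v u) u)) \<and> (u \<noteq> 0 \<longrightarrow> 0 < Re (cinner (X *v u) u))"
  proof (cases "u = 0")
    case True thus ?thesis by simp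
  next
    case False
    define v where "v = complex_of_real (1 / norm u) *s u"
    have nv: "norm v = 1" and uv: "u = complex_of_real (norm u) *s v"
      using unit_decomp[OF False] unfolding v_def by auto
    have e: "cinner (X *v u) u = complex_of_real ((norm u)^2) * cinner (X *v v) v"
      by (subst (1 2) uv, subst Q_scale) (simp add: power2_eq_square)
    have n2: "(norm u)^2 > 0" using False by simp
    from sect_unit[OF X nv] have h: "0 < Re (cinner (X *v v) v)"
      "\<bar>Im (cinner (X *v v) v)\<bar> \<le> tan \<alpha> * Re (cinner (X *v v) v)" by auto
    have "\<bar>Im (cinner (X *v u) u)\<bar> = (norm u)^2 * \<bar>Im (cinner (X *v v) v)\<bar>" unfolding e
      by (simp add: abs_mult)
    also have "\<dots> \<le> (norm u)^2 * (tan \<alpha> * Re (cinner (X *v v) v))"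
      by (rule mult_left_mono[OF h(2)]) simp
    also have "\<dots> = tan \<alpha> * Re (cinner (X *v u) u)" unfolding e by simp
    finally show ?thesis using h(1) n2 unfolding e by simp
  qed
  thus "\<bar>Im (cinner (X *v u) u)\<bar> \<le> tan \<alpha> * Re (cinner (X *v u) u)"
    "0 \<le> Re (cinner (X *v u) u)" "u \<noteq> 0 \<Longrightarrow> 0 < Re (cinner (X *v u) u)" by auto
qed

lemma sect_G:
  assumes X: "X \<in> Pi_sector \<alpha>" and ta: "0 \<le> tan \<alpha>"
  shows "(cmod (cinner (X *v y) z))^2 \<le> (1 + (tan \<alpha>)^2) * Re (cinner (X *v y) y) * Re (cinner (X *v z) z)"
proof -
  interpret sesq "\<lambda>y z. cinner (X *v y) z" "tan \<alpha>"
    by unfold_locales (auto simp: mv_add mv_scal cinner_add_left cinner_add_right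
        cinner_scal_left cinner_scal_right sect_all[OF X ta] ta)
  show ?thesis
    by (rule form_G) (metis less_irrefl sect_all(3)[OF X ta])
qed

lemma ReQ_le:
  fixes X :: "complex^'n^'n"
  assumes card: "CARD('n) \<ge> 2" and q0: "0 < cmod q" and q1: "cmod q \<le> 1"
  shows "Re (cinner (X *v z) z) \<le> (wq q X / cmod q) * (norm z)^2"
proof (cases "z = 0")
  case True thus ?thesis by simp
next
  case False
  define v where "v = complex_of_real (1 / norm z) *s z"
  have nv: "norm v = 1" and uv: "z = complex_of_real (norm z) *s v"
    using unit_decomp[OF False] unfolding v_def by auto
  have e: "cinner (X *v z) z = complex_of_real ((norm z)^2) * cinner (X *v v) v"
    by (subst (1 2) uv, subst Q_scale) (simp add: power2_eq_square)
  have "cmod q * Re (cinner (X *v v) v) \<le> cmod q * cmod (cinner (X *v v) v)"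
    using q0 complex_Re_le_cmod by (simp)
  also have "\<dots> \<le> wq q X" by (rule wq_lower[OF card nv q1])
  finally have "Re (cinner (X *v v) v) \<le> wq q X / cmod q" using q0 by (simp add: field_simps)
  hence "(norm z)^2 * Re (cinner (X *v v) v) \<le> (norm z)^2 * (wq q X / cmod q)"
    by (rule mult_left_mono) simp
  thus ?thesis unfolding e by (simp add: mult.commute)
qed

lemma wq_pos:
  fixes X :: "complex^'n^'n"
  assumes card: "CARD('n) \<ge> 2" and q0: "0 < cmod q" and q1: "cmod q \<le> 1"
    and X: "X \<in> Pi_sector \<alpha>"
  shows "0 < wq q X"
proof -
  define e :: "complex^'n" where "e = axis undefined 1"
  have ne1: "norm e = 1"
    unfolding e_def by (simp add: norm_sq_cinner cinner_axis power2_eq_1_iff[symmetric] axis_nth)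
  have "0 < Re (cinner (X *v e) e)" using sect_unit[OF X ne1] by simp
  hence "0 < cmod (cinner (X *v e) e)" using complex_Re_le_cmod by (smt (verit))
  hence "0 < cmod q * cmod (cinner (X *v e) e)" using q0 by simp
  also have "\<dots> \<le> wq q X" by (rule wq_lower[OF card ne1 q1])
  finally show ?thesis .
qed

lemma F1:
  fixes X :: "complex^'n^'n"
  assumes card: "CARD('n) \<ge> 2" and q0: "0 < cmod q" and q1: "cmod q \<le> 1"
    and X: "X \<in> Pi_sector \<alpha>" and ta: "0 \<le> tan \<alpha>"
  shows "(norm (X *v y))^2 \<le> (1 + (tan \<alpha>)^2) * (wq q X / cmod q) * Re (cinner (X *v y) y)"
proof -
  define n where "n = (norm (X *v y))^2"
  define M where "M = wq q X / cmod q"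
  have M0: "0 < M" unfolding M_def using wq_pos[OF card q0 q1 X] q0 by simp
  have R0: "0 \<le> Re (cinner (X *v y) y)" by (rule sect_all(2)[OF X ta])
  have c: "cmod (cinner (X *v y) (X *v y)) = n" unfolding n_def cinner_self norm_of_real by simp
  have "n^2 \<le> (1 + (tan \<alpha>)^2) * Re (cinner (X *v y) y) * Re (cinner (X *v (X *v y)) (X *v y))"
    using sect_G[OF X ta, of y "X *v y"] unfolding c .
  also have "\<dots> \<le> (1 + (tan \<alpha>)^2) * Re (cinner (X *v y) y) * (M * n)"
    by (rule mult_left_mono) (use ReQ_le[OF card q0 q1, of X "X *v y"] R0 in \<open>simp_all add: M_def n_def\<close>)
  finally have h: "n * n \<le> n * ((1 + (tan \<alpha>)^2) * M * Re (cinner (X *v y) y))"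
    by (simp add: power2_eq_square algebra_simps)
  show ?thesis
  proof (cases "n = 0")
    case True thus ?thesis using M0 R0 unfolding n_def M_def by simp
  next
    case False
    hence "n > 0" unfolding n_def by simp
    with h have "n \<le> (1 + (tan \<alpha>)^2) * M * Re (cinner (X *v y) y)" by simp
    thus ?thesis unfolding n_def M_def .
  qed
qed



lemma inj_invertible:
  fixes X :: "complex^'n^'n"
  assumes "\<And>y. X *v y = 0 \<Longrightarrow> y = 0"
  shows "invertible X"
  using assms by (simp add: invertible_left_inverse matrix_left_invertible_ker)

lemma minv:
  fixes X :: "complex^'n^'n"
  assumes "invertible X"
  shows "X ** matrix_inv X = mat 1" "matrix_inv X ** X = mat 1"
proof -
  have "\<exists>A'. X ** A' = mat 1 \<and> A' ** X = mat 1" using assms unfolding invertible_def by blast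
  hence "X ** matrix_inv X = mat 1 \<and> matrix_inv X ** X = mat 1"
    unfolding matrix_inv_def by (rule someI_ex)
  thus "X ** matrix_inv X = mat 1" "matrix_inv X ** X = mat 1" by auto
qed

lemma minv_apply:
  fixes X :: "complex^'n^'n"
  assumes "invertible X"
  shows "X *v (matrix_inv X *v x) = x" "matrix_inv X *v (X *v x) = x"
  using minv[OF assms] by (simp_all add: matrix_vector_mul_assoc)

lemma sect_invertible:
  assumes X: "X \<in> Pi_sector \<alpha>" and ta: "0 \<le> tan \<alpha>"
  shows "invertible X"
proof (rule inj_invertible)
  fix y assume "X *v y = 0"
  hence "Re (cinner (X *v y) y) = 0" by simp
  thus "y = 0" using sect_all(3)[OF X ta, of y] by (metis less_irrefl)
qed

lemma cos_tan: 
  assumes "0 \<le> \<alpha>" "\<alpha> < pi/2"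
  shows "0 < cos \<alpha>" "0 \<le> tan \<alpha>" "(cos \<alpha>)^2 * (1 + (tan \<alpha>)^2) = 1"
proof -
  show c: "0 < cos \<alpha>" using assms by (intro cos_gt_zero_pi) auto
  show "0 \<le> tan \<alpha>"
  proof (cases "\<alpha> = 0")
    case False thus ?thesis using assms tan_gt_zero[of \<alpha>] by simp
  qed simp
  show "(cos \<alpha>)^2 * (1 + (tan \<alpha>)^2) = 1" using c
    by (simp add: tan_def field_simps power2_eq_square sin_squared_eq)
qed

lemma inv_lower:
  fixes X :: "complex^'n^'n"
  assumes card: "CARD('n) \<ge> 2" and q0: "0 < cmod q" and q1: "cmod q \<le> 1"
    and X: "X \<in> Pi_sector \<alpha>" and a0: "0 \<le> \<alpha>" and a1: "\<alpha> < pi/2"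
  shows "(cos \<alpha>)^2 / (wq q X / cmod q) * (norm x)^2 \<le> Re (cinner (matrix_inv X *v x) x)"
proof -
  note ct = cos_tan[OF a0 a1]
  have inv: "invertible X" by (rule sect_invertible[OF X ct(2)])
  define y where "y = matrix_inv X *v x"
  have xy: "x = X *v y" unfolding y_def using minv_apply(1)[OF inv] by simp
  define M where "M = wq q X / cmod q"
  have M0: "0 < M" unfolding M_def using wq_pos[OF card q0 q1 X] q0 by simp
  have e: "Re (cinner (matrix_inv X *v x) x) = Re (cinner (X *v y) y)"
  proof -
    have "cinner (matrix_inv X *v x) x = cinner y (X *v y)" unfolding y_def[symmetric] using xy by simp
    also have "\<dots> = cnj (cinner (X *v y) y)" by (simp add: cinner_cnj)
    finally show ?thesis by simp
  qed
  have "(norm x)^2 \<le> (1 + (tan \<alpha>)^2) * M * Re (cinner (X *v y) y)"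
    unfolding xy M_def by (rule F1[OF card q0 q1 X ct(2)])
  hence "(cos \<alpha>)^2 * (norm x)^2 \<le> (cos \<alpha>)^2 * ((1 + (tan \<alpha>)^2) * M * Re (cinner (X *v y) y))"
    by (rule mult_left_mono) simp
  also have "\<dots> = M * Re (cinner (X *v y) y)" by (simp only: mult.assoc[symmetric] ct(3) mult_1_left)
  finally have "(cos \<alpha>)^2 * (norm x)^2 / M \<le> Re (cinner (X *v y) y)" using M0 by (simp add: field_simps)
  thus ?thesis unfolding e M_def[symmetric] by (simp add: field_simps)
qed

lemma comb_lower:
  fixes A B :: "complex^'n^'n"
  assumes card: "CARD('n) \<ge> 2" and q0: "0 < cmod q" and q1: "cmod q \<le> 1"
    and A: "A \<in> Pi_sector \<alpha>" and B: "B \<in> Pi_sector \<alpha>" and a0: "0 \<le> \<alpha>" and a1: "\<alpha> < pi/2"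
    and a: "0 \<le> a" and b: "0 \<le> b"
  shows "(cos \<alpha>)^2 * (a / (wq q A / cmod q) + b / (wq q B / cmod q)) * (norm x)^2
     \<le> Re (cinner ((a *\<^sub>R matrix_inv A + b *\<^sub>R matrix_inv B) *v x) x)"
proof -
  have e: "Re (cinner ((a *\<^sub>R matrix_inv A + b *\<^sub>R matrix_inv B) *v x) x)
     = a * Re (cinner (matrix_inv A *v x) x) + b * Re (cinner (matrix_inv B *v x) x)"
    unfolding mv_lin cinner_add_left cinner_scal_left by simp
  have "a * ((cos \<alpha>)^2 / (wq q A / cmod q) * (norm x)^2) \<le> a * Re (cinner (matrix_inv A *v x) x)"
    by (rule mult_left_mono[OF inv_lower[OF card q0 q1 A a0 a1] a])
  moreover have "b * ((cos \<alpha>)^2 / (wq q B / cmod q) * (norm x)^2) \<le> b * Re (cinner (matrix_inv B *v x) x)"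
    by (rule mult_left_mono[OF inv_lower[OF card q0 q1 B a0 a1] b])
  ultimately show ?thesis unfolding e by (simp add: algebra_simps)
qed

lemma inv_bound:
  fixes Y :: "complex^'n^'n"
  assumes m0: "0 < m" and h: "\<And>x. m * (norm x)^2 \<le> Re (cinner (Y *v x) x)"
  shows "norm (matrix_inv Y *v x) \<le> (1/m) * norm x"
proof -
  have lb: "m * norm u \<le> norm (Y *v u)" for u
  proof (cases "u = 0")
    case True thus ?thesis by simp
  next
    case False
    have "m * (norm u)^2 \<le> Re (cinner (Y *v u) u)" by (rule h)
    also have "\<dots> \<le> cmod (cinner (Y *v u) u)" by (rule complex_Re_le_cmod)
    also have "\<dots> \<le> norm (Y *v u) * norm u" by (rule cinner_CS)
    finally have "(m * norm u) * norm u \<le> norm (Y *v u) * norm u" by (simp add: power2_eq_square mult.assoc)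
    thus ?thesis using False by simp
  qed
  have inv: "invertible Y"
  proof (rule inj_invertible)
    fix y assume "Y *v y = 0"
    hence "m * norm y \<le> 0" using lb[of y] by simp
    thus "y = 0" using m0 by (simp add: mult_le_0_iff)
  qed
  have "m * norm (matrix_inv Y *v x) \<le> norm x" using lb[of "matrix_inv Y *v x"] minv_apply(1)[OF inv] by simp
  thus ?thesis using m0 by (simp add: field_simps)
qed



lemma scaled_int:
  fixes t a b :: real
  assumes t0: "0 < t" and t1: "t < 1" and a: "0 < a" and b: "0 < b"
  shows "((\<lambda>s. s powr (t-1) / (1/a + s/b)) has_integral (a powr (1-t) * b powr t * (pi / sin (t*pi)))) {0<..}"
proof -
  have h: "((\<lambda>u. u powr (t-1) / (1+u/(b/a))) has_integral ((b/a) powr t * (pi / sin (t*pi)))) {0<..}"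
    by (rule beta_ioi) (use assms in auto)
  have h2: "((\<lambda>u. a *\<^sub>R (u powr (t-1) / (1+u/(b/a)))) has_integral (a *\<^sub>R ((b/a) powr t * (pi / sin (t*pi))))) {0<..}"
    by (rule has_integral_cmul[OF h])
  have f: "a *\<^sub>R (u powr (t-1) / (1+u/(b/a))) = u powr (t-1) / (1/a + u/b)" if "u \<in> {0<..}" for u
  proof -
    have "1 + u/(b/a) = a * (1/a + u/b)" using a b by (simp add: field_simps)
    thus ?thesis using a by simp
  qed
  have v: "a *\<^sub>R ((b/a) powr t * (pi / sin (t*pi))) = a powr (1-t) * b powr t * (pi / sin (t*pi))"
    using a b by (simp add: powr_divide powr_diff)
  have "((\<lambda>s. s powr (t-1) / (1/a + s/b)) has_integral (a powr (1-t) * b powr t * (pi / sin (t*pi)))) {0<..}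
     = ((\<lambda>u. a *\<^sub>R (u powr (t-1) / (1+u/(b/a)))) has_integral (a powr (1-t) * b powr t * (pi / sin (t*pi)))) {0<..}"
    by (rule has_integral_cong) (metis f)
  thus ?thesis using h2 unfolding v by simp
qed

lemma mv_scaleR: "((c::real) *\<^sub>R (M::complex^'n^'m)) *v x = c *\<^sub>R (M *v x)"
  by (simp add: vec_eq_iff matrix_vector_mult_def cscaleR sum_distrib_left mult.assoc)

lemma mv_add_left: "((M::complex^'n^'m) + N) *v x = M *v x + N *v x"
  by (simp add: vec_eq_iff matrix_vector_mult_def distrib_right sum.distrib)

lemma bl_mv: "bounded_linear (\<lambda>M::complex^'n^'m. M *v x)"
proof -
  have "linear (\<lambda>M::complex^'n^'m. M *v x)"
    by (rule linearI) (simp_all add: mv_add_left mv_scaleR)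
  thus ?thesis by (simp add: linear_conv_bounded_linear)
qed

theorem mainTheorem11:
  fixes A B :: "complex^'n^'n" and \<alpha> t :: real and q :: complex
  assumes "CARD('n) \<ge> 2"
    and "0 \<le> \<alpha>" and "\<alpha> < pi / 2"
    and "A \<in> Pi_sector \<alpha>" and "B \<in> Pi_sector \<alpha>"
    and "0 < cmod q" and "cmod q \<le> 1"
    and "0 < t" and "t < 1"
  shows "((cmod q)^2 * wq q (geo_mean t A B)
           \<le> (1 / cos \<alpha>)^3 * (wq q A powr (1 - t)) * (wq q B powr t))
    \<and> ((cmod q)^2 * wq q (matrix_inv ((1 - t) *\<^sub>R matrix_inv A + t *\<^sub>R matrix_inv B))
           \<le> (1 / cos \<alpha>)^3 * inverse ((1 - t) * inverse (wq q A) + t * inverse (wq q B)))"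
proof -
  note card = assms(1) and a0 = assms(2) and a1 = assms(3) and A = assms(4) and B = assms(5)
    and q0 = assms(6) and q1 = assms(7) and t0 = assms(8) and t1 = assms(9)
  note ct = cos_tan[OF a0 a1]
  define wA where "wA = wq q A"
  define wB where "wB = wq q B"
  have wA0: "0 < wA" unfolding wA_def by (rule wq_pos[OF card q0 q1 A])
  have wB0: "0 < wB" unfolding wB_def by (rule wq_pos[OF card q0 q1 B])
  define MA where "MA = wA / cmod q"
  define MB where "MB = wB / cmod q"
  have MA0: "0 < MA" unfolding MA_def using wA0 q0 by simp
  have MB0: "0 < MB" unfolding MB_def using wB0 q0 by simp
  define c2 where "c2 = (cos \<alpha>)^2"
  have c20: "0 < c2" unfolding c2_def using ct(1) by simp
  have qc: "cmod q * cos \<alpha> \<le> 1"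
  proof -
    have "cos \<alpha> \<le> 1" by simp
    thus ?thesis using q1 ct(1) q0 by (metis mult_le_one less_imp_le norm_ge_zero)
  qed
  have comb: "\<And>a b x. 0 \<le> a \<Longrightarrow> 0 \<le> b \<Longrightarrow> c2 * (a / MA + b / MB) * (norm x)^2
     \<le> Re (cinner ((a *\<^sub>R matrix_inv A + b *\<^sub>R matrix_inv B) *v x) x)"
    unfolding c2_def MA_def MB_def wA_def wB_def by (rule comb_lower[OF card q0 q1 A B a0 a1])
  have invb: "\<And>a b x. 0 \<le> a \<Longrightarrow> 0 \<le> b \<Longrightarrow> 0 < c2 * (a / MA + b / MB) \<Longrightarrow>
     norm (matrix_inv (a *\<^sub>R matrix_inv A + b *\<^sub>R matrix_inv B) *v x) \<le> (1 / (c2 * (a / MA + b / MB))) * norm x"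
    by (rule inv_bound) (auto intro: comb)
  define Hs where "Hs = (1 - t) / wA + t / wB"
  have Hs0: "0 < Hs" unfolding Hs_def using wA0 wB0 t0 t1 by (simp add: add_pos_pos)
  have mb: "c2 * ((1 - t) / MA + t / MB) = c2 * cmod q * Hs"
    unfolding MA_def MB_def Hs_def using q0 by (simp add: field_simps)
  have mb0: "0 < c2 * cmod q * Hs" using c20 q0 Hs0 by simp
  have wH: "wq q (matrix_inv ((1 - t) *\<^sub>R matrix_inv A + t *\<^sub>R matrix_inv B)) \<le> 1 / (c2 * cmod q * Hs)"
    by (rule wq_upper[OF card q1]) (use invb[of "1-t" t] t0 t1 mb mb0 in auto)
  have partb: "(cmod q)^2 * wq q (matrix_inv ((1 - t) *\<^sub>R matrix_inv A + t *\<^sub>R matrix_inv B))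
           \<le> (1 / cos \<alpha>)^3 * inverse ((1 - t) * inverse (wq q A) + t * inverse (wq q B))"
  proof -
    have "(cmod q)^2 * wq q (matrix_inv ((1 - t) *\<^sub>R matrix_inv A + t *\<^sub>R matrix_inv B))
        \<le> (cmod q)^2 * (1 / (c2 * cmod q * Hs))"
      by (rule mult_left_mono[OF wH]) simp
    also have "\<dots> = (cmod q * cos \<alpha>) * (1 / (cos \<alpha>)^3 * (1 / Hs))"
      unfolding c2_def using q0 ct(1) Hs0 by (simp add: field_simps power2_eq_square power3_eq_cube)
    also have "\<dots> \<le> 1 * (1 / (cos \<alpha>)^3 * (1 / Hs))"
      by (rule mult_right_mono[OF qc]) (use ct(1) Hs0 in simp)
    also have "\<dots> = (1 / cos \<alpha>)^3 * inverse ((1 - t) * inverse (wq q A) + t * inverse (wq q B))"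
      unfolding Hs_def wA_def wB_def by (simp add: field_simps power_divide)
    finally show ?thesis .
  qed
  define F where "F s = s powr (t - 1) *\<^sub>R matrix_inv (matrix_inv A + s *\<^sub>R matrix_inv B)" for s :: real
  define g where "g s = (1 / c2) * (s powr (t - 1) / (1 / MA + s / MB))" for s :: real
  define I where "I = (1 / c2) * (MA powr (1 - t) * MB powr t * (pi / sin (t * pi)))"
  have gi: "(g has_integral I) {0<..}"
    unfolding g_def I_def by (rule has_integral_mult_right[OF scaled_int[OF t0 t1 MA0 MB0]])
  have sp: "0 < sin (t * pi)" using t0 t1 by (intro sin_gt_zero) (auto simp: mult_less_cancel_right1)
  define C where "C = (1 / c2) * (MA powr (1 - t) * MB powr t)"
  have C0: "0 \<le> C" unfolding C_def using c20 by simp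
  have Fb: "norm (F s *v x) \<le> g s * norm x" if "s \<in> {0<..}" for s x
  proof -
    have s0: "0 < s" using that by simp
    have p: "0 < c2 * (1 / MA + s / MB)" using c20 MA0 MB0 s0 by (simp add: add_pos_pos)
    have "norm (matrix_inv (1 *\<^sub>R matrix_inv A + s *\<^sub>R matrix_inv B) *v x) \<le> (1 / (c2 * (1 / MA + s / MB))) * norm x"
      by (rule invb) (use s0 p in auto)
    hence "s powr (t - 1) * norm (matrix_inv (matrix_inv A + s *\<^sub>R matrix_inv B) *v x)
        \<le> s powr (t - 1) * ((1 / (c2 * (1 / MA + s / MB))) * norm x)"
      by (intro mult_left_mono) auto
    thus ?thesis unfolding F_def g_def mv_scaleR using s0 by (simp add: field_simps)
  qed
  have Gb: "norm (geo_mean t A B *v x) \<le> C * norm x" for x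
  proof (cases "F integrable_on {0<..}")
    case True
    have e: "geo_mean t A B *v x = (sin (t * pi) / pi) *\<^sub>R integral {0<..} (\<lambda>s. F s *v x)"
      unfolding geo_mean_def F_def[symmetric] mv_scaleR
      using integral_linear[OF True bl_mv[of x]] by (simp add: o_def)
    have Fi: "(\<lambda>s. F s *v x) integrable_on {0<..}"
      using integrable_linear[OF True bl_mv[of x]] by (simp add: o_def)
    have "norm (integral {0<..} (\<lambda>s. F s *v x)) \<le> integral {0<..} (\<lambda>s. g s * norm x)"
      by (rule integral_norm_bound_integral[OF Fi]) (use gi Fb in \<open>auto intro: integrable_on_mult_left\<close>)
    also have "\<dots> = I * norm x" using gi by (simp add: integral_mult_left integral_unique)
    finally have ib: "norm (integral {0<..} (\<lambda>s. F s *v x)) \<le> I * norm x" .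
    have "norm (geo_mean t A B *v x) = (sin (t * pi) / pi) * norm (integral {0<..} (\<lambda>s. F s *v x))"
      unfolding e using sp by simp
    also have "\<dots> \<le> (sin (t * pi) / pi) * (I * norm x)"
      by (rule mult_left_mono[OF ib]) (use sp in simp)
    also have "\<dots> = C * norm x" unfolding I_def C_def using sp by (simp add: field_simps)
    finally show ?thesis .
  next
    case False
    hence "geo_mean t A B = 0" unfolding geo_mean_def F_def[symmetric] by (simp add: not_integrable_integral)
    thus ?thesis using C0 by simp
  qed
  have wG: "wq q (geo_mean t A B) \<le> C" by (rule wq_upper[OF card q1 Gb])
  have parta: "(cmod q)^2 * wq q (geo_mean t A B) \<le> (1 / cos \<alpha>)^3 * (wq q A powr (1 - t)) * (wq q B powr t)"
  proof -
    have s1: "(cmod q)^2 * wq q (geo_mean t A B) \<le> (cmod q)^2 * C"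
      by (rule mult_left_mono[OF wG]) simp
    have s2: "MA powr (1 - t) * MB powr t = (wA powr (1 - t) * wB powr t) / (cmod q powr (1 - t) * cmod q powr t)"
      unfolding MA_def MB_def using wA0 wB0 q0 by (simp add: powr_divide)
    have s3: "cmod q powr (1 - t) * cmod q powr t = cmod q"
      using q0 by (simp add: powr_add[symmetric])
    have s4: "(cmod q)^2 * C = (cmod q * cos \<alpha>) * ((1 / cos \<alpha>)^3 * (wA powr (1 - t) * wB powr t))"
      unfolding C_def s2 s3 c2_def using q0 ct(1) by (simp add: field_simps power2_eq_square power3_eq_cube)
    have s5: "(cmod q * cos \<alpha>) * ((1 / cos \<alpha>)^3 * (wA powr (1 - t) * wB powr t))
        \<le> 1 * ((1 / cos \<alpha>)^3 * (wA powr (1 - t) * wB powr t))"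
      by (rule mult_right_mono[OF qc]) (use ct(1) in simp)
    have "(cmod q)^2 * wq q (geo_mean t A B) \<le> (1 / cos \<alpha>)^3 * (wA powr (1 - t) * wB powr t)"
      using s1 s4 s5 by simp
    thus ?thesis unfolding wA_def wB_def by (simp add: mult.assoc)
  qed
  show ?thesis using parta partb by blast
qed

end
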